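(* Assume $0<a,b<1$, $r>2$, $s>2$, $r>as$, $s>br$. Let $\underline\alpha\in(\tilde\alpha,1)$, $\underline\beta\in(\tilde\beta,1)$, $\bar\alpha\in(\underline\alpha,1)$, $\bar\beta\in(\underline\beta,1)$, $h\in(0,\min\{\underline c_1(\underline\alpha,\underline\beta),\underline c_2(\underline\alpha,\underline\beta)\})$. Let $(\alpha_n)_{n\in\mathbb N}$, $(\beta_n)_{n\in\mathbb N}$ satisfy $\alpha_n\in(\underline\alpha,\bar\alpha)$, $\beta_n\in(\underline\beta,\bar\beta)$ for all $n$, and let $(x_n,y_n)$ solve $$x_{n+1}=x_n[(1-\alpha_{n+1})e^{r-x_n-ay_n}+\alpha_{n+1}],\quad y_{n+1}=y_n[(1-\beta_{n+1})e^{s-bx_n-y_n}+\beta_{n+1}],\quad n\in\mathbb N_0,$$ with $x_0,y_0>0$. Then: (a) if $(x_0,y_0)\in D_{\underline\alpha,\underline\beta}$ then $(x_n,y_n)\in D_{\underline\alpha,\underline\beta}$ for all $n\in\mathbb N$; (b) if $(x_0,y_0)\in D_{\underline\alpha,\underline\beta}(h)$ then $(x_n,y_n)\in D_{\underline\alpha,\underline\beta}(h)$ for all $n\in\mathbb N$; (c) if $(x_0,y_0)\notin D_{\underline\alpha,\underline\beta}(h)$, there is $\tilde S=\tilde S(x_0,y_0,\underline\alpha,\underline\beta,\bar\alpha,\bar\beta,h)\in\mathbb N$ (not depending on the particular sequences $\alpha_n,\beta_n$) such that $(x_n,y_n)\in D_{\underline\alpha,\underline\beta}(h)$ for all $n\ge\tilde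 S$.
   Context: Let $f(\alpha,x,y)=x[(1-\alpha)e^{r-x-ay}+\alpha]$, $g(\beta,x,y)=y[(1-\beta)e^{s-bx-y}+\beta]$. Define $\mathcal H_1(\alpha)=\max\{(1-\alpha)e^{r-1}+2\alpha,\,r\}$, $\mathcal H_2(\beta)=\max\{(1-\beta)e^{s-1}+2\beta,\,s\}$, $c_1(\beta)=r-a\mathcal H_2(\beta)$, $c_2(\alpha)=s-b\mathcal H_1(\alpha)$, $\tilde\alpha=\max\{\frac{e^{r-1}-s/b}{e^{r-1}-2},0\}$, $\tilde\beta=\max\{\frac{e^{s-1}-r/a}{e^{s-1}-2},0\}$. For $\alpha\in(\tilde\alpha,1)$, $\beta\in(\tilde\beta,1)$: $\underline c_1(\alpha,\beta)=\min\{f(\alpha,x,y):x\in[c_1(\beta),\mathcal H_1(\alpha)],y\in[0,\mathcal H_2(\beta)]\}$, $\underline c_2(\alpha,\beta)=\min\{g(\beta,x,y):x\in[0,\mathcal H_1(\alpha)],y\in[c_2(\alpha),\mathcal H_2(\beta)]\}$, $D_{\alpha,\beta}=[\underline c_1(\alpha,\beta),\mathcal H_1(\alpha)]\times[\underline c_2(\alpha,\beta),\mathcal H_2(\beta)]$, $D_{\alpha,\beta}(h)=[\underline c_1(\alpha,\beta)-h,\mathcal H_1(\alpha)]\times[\underline c_2(\alpha,\beta)-h,\mathcal H_2(\beta)]$. *)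

theory Defs
  imports Complex_Main
begin

definition fmap :: "real \<Rightarrow> real \<Rightarrow> real \<Rightarrow> real \<Rightarrow> real \<Rightarrow> real" where
  "fmap r a \<alpha> x y = x * ((1 - \<alpha>) * exp (r - x - a * y) + \<alpha>)"

definition gmap :: "real \<Rightarrow> real \<Rightarrow> real \<Rightarrow> real \<Rightarrow> real \<Rightarrow> real" where
  "gmap s b \<beta> x y = y * ((1 - \<beta>) * exp (s - b * x - y) + \<beta>)"

definition H1 :: "real \<Rightarrow> real \<Rightarrow> real" where
  "H1 r \<alpha> = max ((1 - \<alpha>) * exp (r - 1) + 2 * \<alpha>) r"

definition H2 :: "real \<Rightarrow> real \<Rightarrow> real" where
  "H2 s \<beta> = max ((1 - \<beta>) * exp (s - 1) + 2 * \<beta>) s"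

definition c1 :: "real \<Rightarrow> real \<Rightarrow> real \<Rightarrow> real \<Rightarrow> real" where
  "c1 r s a \<beta> = r - a * H2 s \<beta>"

definition c2 :: "real \<Rightarrow> real \<Rightarrow> real \<Rightarrow> real \<Rightarrow> real" where
  "c2 r s b \<alpha> = s - b * H1 r \<alpha>"

definition alpha_tilde :: "real \<Rightarrow> real \<Rightarrow> real \<Rightarrow> real" where
  "alpha_tilde r s b = max ((exp (r - 1) - s / b) / (exp (r - 1) - 2)) 0"

definition beta_tilde :: "real \<Rightarrow> real \<Rightarrow> real \<Rightarrow> real" where
  "beta_tilde r s a = max ((exp (s - 1) - r / a) / (exp (s - 1) - 2)) 0"

text \<open>Minimum of a continuous function over a compact rectangle, written as Inf of the image.\<close>
definition lc1 :: "real \<Rightarrow> real \<Rightarrow> real \<Rightarrow> real \<Rightarrow> real \<Rightarrow> real" where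
  "lc1 r s a \<alpha> \<beta> =
     Inf ((\<lambda>(x, y). fmap r a \<alpha> x y) ` ({c1 r s a \<beta> .. H1 r \<alpha>} \<times> {0 .. H2 s \<beta>}))"

definition lc2 :: "real \<Rightarrow> real \<Rightarrow> real \<Rightarrow> real \<Rightarrow> real \<Rightarrow> real" where
  "lc2 r s b \<alpha> \<beta> =
     Inf ((\<lambda>(x, y). gmap s b \<beta> x y) ` ({0 .. H1 r \<alpha>} \<times> {c2 r s b \<alpha> .. H2 s \<beta>}))"

definition Dh :: "real \<Rightarrow> real \<Rightarrow> real \<Rightarrow> real \<Rightarrow> real \<Rightarrow> real \<Rightarrow> real \<Rightarrow> (real \<times> real) set" where
  "Dh r s a b \<alpha> \<beta> h =
     {lc1 r s a \<alpha> \<beta> - h .. H1 r \<alpha>} \<times> {lc2 r s b \<alpha> \<beta> - h .. H2 s \<beta>}"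

definition D :: "real \<Rightarrow> real \<Rightarrow> real \<Rightarrow> real \<Rightarrow> real \<Rightarrow> real \<Rightarrow> (real \<times> real) set" where
  "D r s a b \<alpha> \<beta> = {lc1 r s a \<alpha> \<beta> .. H1 r \<alpha>} \<times> {lc2 r s b \<alpha> \<beta> .. H2 s \<beta>}"

definition is_solution ::
  "real \<Rightarrow> real \<Rightarrow> real \<Rightarrow> real \<Rightarrow> (nat \<Rightarrow> real) \<Rightarrow> (nat \<Rightarrow> real) \<Rightarrow> (nat \<Rightarrow> real) \<Rightarrow> (nat \<Rightarrow> real) \<Rightarrow> bool" where
  "is_solution r s a b al be x y \<longleftrightarrow>
     (\<forall>n. x (Suc n) = x n * ((1 - al (Suc n)) * exp (r - x n - a * y n) + al (Suc n))
        \<and> y (Suc n) = y n * ((1 - be (Suc n)) * exp (s - b * x n - y n) + be (Suc n)))"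

end

theory Submission
  imports Defs "HOL-Analysis.Convex"
begin

definition phi :: "real \<Rightarrow> real \<Rightarrow> real \<Rightarrow> real \<Rightarrow> real" where
  "phi \<alpha> R x w = x * ((1 - \<alpha>) * exp (R - x - w) + \<alpha>)"

lemma phi_pos: "0 < x \<Longrightarrow> 0 < \<alpha> \<Longrightarrow> \<alpha> < 1 \<Longrightarrow> \<alpha> * x \<le> phi \<alpha> R x w \<and> 0 < phi \<alpha> R x w"
  unfolding phi_def
  by (smt (verit) exp_gt_zero mult_pos_pos distrib_left mult.commute)

lemma ratio_le:
  fixes E d \<alpha> \<alpha>U :: real
  assumes "E \<le> -d" "0 \<le> d" "\<alpha> \<le> \<alpha>U" "\<alpha>U < 1"
  shows "(1 - \<alpha>) * exp E + \<alpha> \<le> (1 - \<alpha>U) * exp (-d) + \<alpha>U"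
proof -
  have e1: "exp E \<le> exp (-d)" using assms by simp
  have e2: "exp (-d) \<le> 1" using assms by simp
  have "(1 - \<alpha>) * exp E + \<alpha> = exp E + \<alpha> * (1 - exp E)" by algebra
  also have "\<dots> \<le> exp E + \<alpha>U * (1 - exp E)"
    using assms e1 e2 by (intro add_left_mono mult_right_mono) auto
  also have "\<dots> = (1 - \<alpha>U) * exp E + \<alpha>U" by algebra
  also have "\<dots> \<le> (1 - \<alpha>U) * exp (-d) + \<alpha>U" using e1 assms by simp
  finally show ?thesis .
qed

lemma ratio_ge:
  fixes E d \<alpha> \<alpha>U :: real
  assumes "E \<ge> d" "0 \<le> d" "\<alpha> \<le> \<alpha>U" "\<alpha>U < 1"
  shows "(1 - \<alpha>) * exp E + \<alpha> \<ge> (1 - \<alpha>U) * exp d + \<alpha>U"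
proof -
  have e1: "exp E \<ge> exp d" using assms by simp
  have e2: "exp d \<ge> 1" using assms by simp
  have "(1 - \<alpha>U) * exp d + \<alpha>U \<le> (1 - \<alpha>U) * exp E + \<alpha>U" using e1 assms by simp
  also have "\<dots> = exp E - \<alpha>U * (exp E - 1)" by algebra
  also have "\<dots> \<le> exp E - \<alpha> * (exp E - 1)"
    using assms e1 e2 by (intro diff_left_mono mult_right_mono) auto
  also have "\<dots> = (1 - \<alpha>) * exp E + \<alpha>" by algebra
  finally show ?thesis .
qed

lemma convex_psi: "convex_on {2..} (\<lambda>t::real. t * exp (R - t))"
proof (rule f''_ge0_imp_convex[where f' = "\<lambda>t. (1 - t) * exp (R - t)" and f'' = "\<lambda>t. (t - 2) * exp (R - t)"])
  show "convex {2::real..}" by simp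
  fix x :: real
  show "((\<lambda>t. t * exp (R - t)) has_real_derivative (1 - x) * exp (R - x)) (at x)"
    by (rule derivative_eq_intros refl | simp add: algebra_simps)+
  show "((\<lambda>t. (1 - t) * exp (R - t)) has_real_derivative (x - 2) * exp (R - x)) (at x)"
    by (rule derivative_eq_intros refl | simp add: algebra_simps)+
  assume "x \<in> {2..}" then show "0 \<le> (x - 2) * exp (R - x)" by simp
qed

lemma exp_bound1: "(x::real) * exp (R - x) \<le> exp (R - 1)"
proof -
  have "x \<le> exp (x - 1)" using exp_ge_add_one_self[of "x - 1"] by simp
  then have "x * exp (R - x) \<le> exp (x - 1) * exp (R - x)" by (simp add: mult_right_mono)
  also have "\<dots> = exp (R - 1)" by (simp flip: exp_add)
  finally show ?thesis .
qed

lemma exp_bound2: "2 * exp ((R::real) - 2) \<le> exp (R - 1)"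
proof -
  have "2 \<le> exp (1::real)" using exp_ge_add_one_self[of 1] by simp
  then have "2 * exp (R - 2) \<le> exp 1 * exp (R - 2)" by (simp add: mult_right_mono)
  also have "\<dots> = exp (R - 1)" by (simp flip: exp_add)
  finally show ?thesis .
qed

lemma phi_upper:
  fixes \<alpha>L \<alpha> R x w :: real
  assumes "0 < \<alpha>L" "\<alpha>L \<le> \<alpha>" "\<alpha> < 1" "R > 2" "0 < x"
    "x \<le> max ((1 - \<alpha>L) * exp (R - 1) + 2 * \<alpha>L) R" "0 \<le> w"
  shows "phi \<alpha> R x w \<le> max ((1 - \<alpha>L) * exp (R - 1) + 2 * \<alpha>L) R"
proof -
  define Hh where "Hh = max ((1 - \<alpha>L) * exp (R - 1) + 2 * \<alpha>L) R"
  have xH: "x \<le> Hh" using assms Hh_def by simp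
  have b0: "phi \<alpha> R x w \<le> (1 - \<alpha>) * (x * exp (R - x)) + \<alpha> * x"
  proof -
    have "exp (R - x - w) \<le> exp (R - x)" using assms by simp
    then have "x * ((1 - \<alpha>) * exp (R - x - w)) \<le> x * ((1 - \<alpha>) * exp (R - x))"
      using assms by (intro mult_left_mono) auto
    then show ?thesis unfolding phi_def by (simp add: algebra_simps)
  qed
  have eR: "exp (R - 1) \<ge> R" using exp_ge_add_one_self[of "R - 1"] by simp
  have AA: "(1 - \<alpha>) * exp (R - 1) + 2 * \<alpha> \<le> Hh"
  proof -
    have "(\<alpha> - \<alpha>L) * (exp (R - 1) - 2) \<ge> 0" using assms eR by simp
    then have "(1 - \<alpha>) * exp (R - 1) + 2 * \<alpha> \<le> (1 - \<alpha>L) * exp (R - 1) + 2 * \<alpha>L"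
      by (simp add: algebra_simps)
    then show ?thesis unfolding Hh_def by simp
  qed
  have RH: "R \<le> Hh" unfolding Hh_def by simp
  consider "x \<ge> R" | "x \<le> 2" | "2 < x" "x < R" by linarith
  then have "phi \<alpha> R x w \<le> Hh"
  proof cases
    case 1
    have "exp (R - x) \<le> 1" using 1 by simp
    then have "x * exp (R - x) \<le> x" using assms by (simp add: mult_left_le)
    then have "(1 - \<alpha>) * (x * exp (R - x)) \<le> (1 - \<alpha>) * x" using assms by (simp add: mult_left_mono)
    with b0 xH show ?thesis by (simp add: algebra_simps)
  next
    case 2
    have "(1 - \<alpha>) * (x * exp (R - x)) \<le> (1 - \<alpha>) * exp (R - 1)"
      using exp_bound1[of x R] assms by (simp add: mult_left_mono)
    moreover have "\<alpha> * x \<le> \<alpha> * 2" using 2 assms by (simp add: mult_left_mono)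
    ultimately show ?thesis using b0 AA by linarith
  next
    case 3
    define t where "t = (x - 2) / (R - 2)"
    have t0: "0 \<le> t" "t \<le> 1" using 3 assms unfolding t_def by auto
    have "t * (R - 2) = x - 2" using assms unfolding t_def by simp
    then have xt: "x = (1 - t) * 2 + t * R" by (simp add: algebra_simps)
    have "x * exp (R - x) = (\<lambda>t. t * exp (R - t)) ((1 - t) *\<^sub>R 2 + t *\<^sub>R R)" using xt by simp
    also have "\<dots> \<le> (1 - t) * (\<lambda>t. t * exp (R - t)) 2 + t * (\<lambda>t. t * exp (R - t)) R"
      by (rule convex_onD[OF convex_psi]) (use t0 assms in auto)
    finally have cv: "x * exp (R - x) \<le> (1 - t) * (2 * exp (R - 2)) + t * (R * exp (R - R))" by simp
    have "(1 - t) * (2 * exp (R - 2)) \<le> (1 - t) * exp (R - 1)"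
      using exp_bound2[of R] t0 by (simp add: mult_left_mono)
    with cv have cv2: "x * exp (R - x) \<le> (1 - t) * exp (R - 1) + t * R" by simp
    have "phi \<alpha> R x w \<le> (1 - \<alpha>) * ((1 - t) * exp (R - 1) + t * R) + \<alpha> * ((1 - t) * 2 + t * R)"
      using b0 cv2 assms xt by (smt (verit) mult_left_mono)
    also have "\<dots> = (1 - t) * ((1 - \<alpha>) * exp (R - 1) + 2 * \<alpha>) + t * R" by algebra
    also have "\<dots> \<le> (1 - t) * Hh + t * Hh"
      using AA RH t0 by (intro add_mono mult_left_mono) auto
    finally show ?thesis by (simp add: algebra_simps)
  qed
  then show ?thesis unfolding Hh_def .
qed

lemma phi_ratio: "phi \<alpha> R x w = x * ((1 - \<alpha>) * exp (R - x - w) + \<alpha>)" by (simp add: phi_def)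

lemma phi_dec:
  fixes \<alpha>L \<alpha> \<alpha>U R x w w0 \<delta> :: real
  assumes "0 < \<alpha>L" "\<alpha>L \<le> \<alpha>" "\<alpha> \<le> \<alpha>U" "\<alpha>U < 1" "R > 2" "0 < x" "w0 \<le> w" "0 \<le> w0" "0 \<le> \<delta>"
  shows "phi \<alpha> R x w \<le> max (((1 - \<alpha>U) * exp (-(\<delta> + w0)) + \<alpha>U) * x)
                              (max ((1 - \<alpha>L) * exp (R - 1) + 2 * \<alpha>L) R + \<delta>)"
proof -
  define Hh where "Hh = max ((1 - \<alpha>L) * exp (R - 1) + 2 * \<alpha>L) R"
  have RH: "R \<le> Hh" unfolding Hh_def by simp
  consider "x \<le> Hh" | "Hh < x" "x \<le> Hh + \<delta>" | "Hh + \<delta> < x" by linarith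
  then show ?thesis
  proof cases
    case 1
    then have "phi \<alpha> R x w \<le> Hh" using phi_upper[of \<alpha>L \<alpha> R x w] assms unfolding Hh_def by simp
    then show ?thesis unfolding Hh_def using assms by simp
  next
    case 2
    have "(1 - \<alpha>) * exp (R - x - w) + \<alpha> \<le> (1 - \<alpha>U) * exp (-0) + \<alpha>U"
      using 2 RH assms by (intro ratio_le) auto
    then have "phi \<alpha> R x w \<le> x * 1" unfolding phi_ratio using assms
      by (intro mult_left_mono) auto
    then show ?thesis using 2 unfolding Hh_def by simp
  next
    case 3
    have "(1 - \<alpha>) * exp (R - x - w) + \<alpha> \<le> (1 - \<alpha>U) * exp (-(\<delta> + w0)) + \<alpha>U"
      using 3 RH assms by (intro ratio_le) auto
    then have "phi \<alpha> R x w \<le> x * ((1 - \<alpha>U) * exp (-(\<delta> + w0)) + \<alpha>U)" unfolding phi_ratio using assms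
      by (intro mult_left_mono) auto
    then show ?thesis by (simp add: mult.commute)
  qed
qed

lemma phi_grow:
  fixes \<alpha> \<alpha>U R x w \<epsilon> :: real
  assumes "0 < x" "x + w \<le> R - \<epsilon>" "0 \<le> \<epsilon>" "\<alpha> \<le> \<alpha>U" "\<alpha>U < 1"
  shows "phi \<alpha> R x w \<ge> ((1 - \<alpha>U) * exp \<epsilon> + \<alpha>U) * x"
proof -
  have "(1 - \<alpha>) * exp (R - x - w) + \<alpha> \<ge> (1 - \<alpha>U) * exp \<epsilon> + \<alpha>U"
    using assms by (intro ratio_ge) auto
  then have "x * ((1 - \<alpha>U) * exp \<epsilon> + \<alpha>U) \<le> phi \<alpha> R x w" unfolding phi_ratio using assms
    by (intro mult_left_mono) auto
  then show ?thesis by (simp add: mult.commute)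
qed

lemma phi_phase2:
  fixes \<alpha>L \<alpha> \<alpha>U R x w W :: real
  assumes "0 < \<alpha>L" "\<alpha>L \<le> \<alpha>" "\<alpha> \<le> \<alpha>U" "\<alpha>U < 1" "0 < x" "w \<le> W" "W < R"
  shows "phi \<alpha> R x w \<ge> min (((1 - \<alpha>U) * exp ((R - W) / 2) + \<alpha>U) * x) (\<alpha>L * ((R - W) / 2))"
proof (cases "x \<le> (R - W) / 2")
  case True
  have "x + w \<le> R - (R - W) / 2" using True assms by (simp add: field_simps)
  then show ?thesis using phi_grow[of x w R "(R - W) / 2" \<alpha> \<alpha>U] assms by simp
next
  case False
  have "\<alpha>L * ((R - W) / 2) \<le> \<alpha> * x" using False assms
    by (intro mult_mono) auto
  then have "\<alpha>L * ((R - W) / 2) \<le> phi \<alpha> R x w" using phi_pos[of x \<alpha> R w] assms by linarith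
  then show ?thesis by (simp add: min_le_iff_disj)
qed

lemma phi_min:
  fixes \<alpha>L \<alpha> R x w Wm Lo :: real
  assumes "0 < \<alpha>L" "\<alpha>L \<le> \<alpha>" "\<alpha> < 1" "0 < x" "w \<le> Wm"
    and hyp: "R - Wm \<le> x \<Longrightarrow> Lo \<le> phi \<alpha>L R x w"
  shows "phi \<alpha> R x w \<ge> min x Lo"
proof (cases "exp (R - x - w) \<ge> 1")
  case True
  have "(1 - \<alpha>) * exp (R - x - w) + \<alpha> \<ge> (1 - \<alpha>) * exp 0 + \<alpha>"
    using True assms by (intro ratio_ge) auto
  then have "x * 1 \<le> phi \<alpha> R x w" unfolding phi_ratio using assms
    by (intro mult_left_mono) auto
  then show ?thesis by simp
next
  case False
  then have "R - x - w < 0" by (metis exp_zero linorder_not_le not_less_iff_gr_or_eq exp_less_cancel_iff)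
  then have c: "R - Wm \<le> x" using assms by simp
  have "(1 - \<alpha>L) * exp (R - x - w) + \<alpha>L \<le> (1 - \<alpha>) * exp (R - x - w) + \<alpha>"
  proof -
    have "(\<alpha> - \<alpha>L) * (1 - exp (R - x - w)) \<ge> 0" using False assms by simp
    then show ?thesis by (simp add: algebra_simps)
  qed
  then have "phi \<alpha>L R x w \<le> phi \<alpha> R x w" unfolding phi_ratio using assms
    by (intro mult_left_mono) auto
  then show ?thesis using hyp[OF c] by simp
qed

lemma phi_phase4:
  fixes \<alpha>L \<alpha> \<alpha>U R x w Wm Lo h :: real
  assumes "0 < \<alpha>L" "\<alpha>L \<le> \<alpha>" "\<alpha> \<le> \<alpha>U" "\<alpha>U < 1" "0 < x" "w \<le> Wm"
    and hyp: "R - Wm \<le> x \<Longrightarrow> Lo \<le> phi \<alpha>L R x w"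
    and "Lo \<le> R - Wm" "0 < h"
  shows "phi \<alpha> R x w \<ge> min (((1 - \<alpha>U) * exp h + \<alpha>U) * x) (Lo - h)"
proof (cases "x < Lo - h")
  case True
  then show ?thesis using phi_grow[of x w R h \<alpha> \<alpha>U] assms by simp
next
  case False
  then show ?thesis using phi_min[of \<alpha>L \<alpha> x w Wm R Lo] assms hyp by simp
qed

lemma iter_ge:
  fixes u :: "nat \<Rightarrow> real"
  assumes "\<And>n. n \<ge> n0 \<Longrightarrow> u (Suc n) \<ge> min (p * u n) m" "1 \<le> p" "0 \<le> m"
  shows "u (n0 + k) \<ge> min (p ^ k * u n0) m"
proof (induction k)
  case 0 then show ?case by simp
next
  case (Suc k)
  have "min (p ^ Suc k * u n0) m \<le> min (p * u (n0 + k)) m"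
  proof -
    have "p * min (p ^ k * u n0) m \<le> p * u (n0 + k)" using Suc assms by (intro mult_left_mono) auto
    moreover have "min (p ^ Suc k * u n0) m \<le> p * min (p ^ k * u n0) m"
    proof (cases "p ^ k * u n0 \<le> m")
      case True then show ?thesis by simp
    next
      case False
      have "p ^ k * u n0 \<le> p * (p ^ k * u n0)" using mult_right_mono[of 1 p "p ^ k * u n0"] False assms by simp
      moreover have "m \<le> p * m" using mult_right_mono[of 1 p m] assms by simp
      ultimately show ?thesis using False by (simp add: min_def mult.assoc)
    qed
    ultimately show ?thesis by simp
  qed
  also have "\<dots> \<le> u (n0 + Suc k)" using assms(1)[of "n0 + k"] by simp
  finally show ?case .
qed

lemma iter_le:
  fixes u :: "nat \<Rightarrow> real"
  assumes "\<And>n. n \<ge> n0 \<Longrightarrow> u (Suc n) \<le> max (q * u n) M" "0 \<le> q" "q \<le> 1" "0 \<le> M"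
  shows "u (n0 + k) \<le> max (q ^ k * u n0) M"
proof (induction k)
  case 0 then show ?case by simp
next
  case (Suc k)
  have "u (n0 + Suc k) \<le> max (q * u (n0 + k)) M" using assms(1)[of "n0 + k"] by simp
  also have "\<dots> \<le> max (q ^ Suc k * u n0) M"
  proof -
    have "q * u (n0 + k) \<le> q * max (q ^ k * u n0) M" using Suc assms by (intro mult_left_mono) auto
    moreover have "q * max (q ^ k * u n0) M \<le> max (q ^ Suc k * u n0) M"
    proof (cases "q ^ k * u n0 \<le> M")
      case True
      have "q * M \<le> M" using assms mult_left_le_one_le[of M q] by simp
      then show ?thesis using True by (simp add: max_def)
    next
      case False then show ?thesis using assms by (simp add: max_def)
    qed
    ultimately show ?thesis by simp
  qed
  finally show ?case .
qed

lemma H2_H1: "H2 s \<beta> = H1 s \<beta>" unfolding H1_def H2_def ..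

lemma pos_seq:
  fixes x y al be :: "nat \<Rightarrow> real"
  assumes sx: "\<And>n. x (Suc n) = phi (al (Suc n)) r (x n) (a * y n)"
    and sy: "\<And>n. y (Suc n) = phi (be (Suc n)) s (y n) (b * x n)"
    and ra: "\<And>n. 0 < al (Suc n) \<and> al (Suc n) < 1" and rb: "\<And>n. 0 < be (Suc n) \<and> be (Suc n) < 1"
    and "0 < x 0" "0 < y 0"
  shows "0 < x n \<and> 0 < y n"
proof (induction n)
  case 0 then show ?case using assms by simp
next
  case (Suc n) then show ?case using phi_pos ra[of n] rb[of n] sx[of n] sy[of n] by metis
qed

context
  fixes u v al :: "nat \<Rightarrow> real" and \<alpha>L \<alpha>U R c :: real
  assumes st: "\<And>n. u (Suc n) = phi (al (Suc n)) R (u n) (c * v n)"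
    and alr: "\<And>n. \<alpha>L < al (Suc n) \<and> al (Suc n) < \<alpha>U"
    and prm: "0 < \<alpha>L" "\<alpha>U < 1" "R > 2" "0 < c"
    and upos: "\<And>n. 0 < u n" and vpos: "\<And>n. 0 < v n"
begin

lemma st_lower: "u n \<ge> \<alpha>L ^ n * u 0"
proof (induction n)
  case 0 then show ?case by simp
next
  case (Suc n)
  have "\<alpha>L * u n \<le> al (Suc n) * u n" using alr[of n] upos[of n] by (intro mult_right_mono) auto
  also have "\<dots> \<le> u (Suc n)" using phi_pos[of "u n" "al (Suc n)" R "c * v n"] st[of n] alr[of n] upos[of n] prm by auto
  finally have "\<alpha>L * u n \<le> u (Suc n)" .
  moreover have "\<alpha>L * (\<alpha>L ^ n * u 0) \<le> \<alpha>L * u n" using Suc prm by (intro mult_left_mono) auto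
  ultimately show ?case by simp
qed

lemma st_upper_inv: "u n \<le> H1 R \<alpha>L \<Longrightarrow> u (Suc n) \<le> H1 R \<alpha>L"
  using phi_upper[of \<alpha>L "al (Suc n)" R "u n" "c * v n"] st[of n] alr[of n] upos[of n] vpos[of n] prm
  unfolding H1_def by auto

lemma st_phase1:
  assumes "0 \<le> \<delta>"
  shows "u n \<le> max (((1 - \<alpha>U) * exp (-\<delta>) + \<alpha>U) ^ n * u 0) (H1 R \<alpha>L + \<delta>)"
proof -
  have q: "0 \<le> (1 - \<alpha>U) * exp (-\<delta>) + \<alpha>U" "(1 - \<alpha>U) * exp (-\<delta>) + \<alpha>U \<le> 1"
  proof -
    have "exp (-\<delta>) \<le> 1" using assms by simp
    then have "(1 - \<alpha>U) * exp (-\<delta>) \<le> (1 - \<alpha>U) * 1" using prm by (intro mult_left_mono) auto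
    then show "(1 - \<alpha>U) * exp (-\<delta>) + \<alpha>U \<le> 1" by simp
    show "0 \<le> (1 - \<alpha>U) * exp (-\<delta>) + \<alpha>U" using prm alr[of 0] by simp
  qed
  have "u (0 + n) \<le> max (((1 - \<alpha>U) * exp (-\<delta>) + \<alpha>U) ^ n * u 0) (H1 R \<alpha>L + \<delta>)"
  proof (rule iter_le[OF _ q])
    fix m :: nat
    show "u (Suc m) \<le> max (((1 - \<alpha>U) * exp (-\<delta>) + \<alpha>U) * u m) (H1 R \<alpha>L + \<delta>)"
      using phi_dec[of \<alpha>L "al (Suc m)" \<alpha>U R "u m" 0 "c * v m" \<delta>] st[of m] alr[of m] upos[of m] vpos[of m] prm assms
      unfolding H1_def by auto
    have "0 \<le> H1 R \<alpha>L" unfolding H1_def using prm by simp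
    then show "0 \<le> H1 R \<alpha>L + \<delta>" using assms by simp
  qed
  then show ?thesis by simp
qed

lemma st_phase2:
  assumes "\<And>n. n \<ge> N \<Longrightarrow> c * v n \<le> W" "W < R"
  shows "u (N + k) \<ge> min (((1 - \<alpha>U) * exp ((R - W) / 2) + \<alpha>U) ^ k * u N) (\<alpha>L * ((R - W) / 2))"
proof (rule iter_ge)
  fix n assume "N \<le> n"
  then show "min (((1 - \<alpha>U) * exp ((R - W) / 2) + \<alpha>U) * u n) (\<alpha>L * ((R - W) / 2)) \<le> u (Suc n)"
    using phi_phase2[of \<alpha>L "al (Suc n)" \<alpha>U "u n" "c * v n" W R] st[of n] alr[of n] upos[of n] prm assms
    by auto
next
  have "exp ((R - W) / 2) \<ge> 1" using assms by simp
  then have "(1 - \<alpha>U) * 1 \<le> (1 - \<alpha>U) * exp ((R - W) / 2)" using prm by (intro mult_left_mono) auto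
  then show "1 \<le> (1 - \<alpha>U) * exp ((R - W) / 2) + \<alpha>U" by simp
  show "0 \<le> \<alpha>L * ((R - W) / 2)" using assms prm by simp
qed

lemma st_phase3:
  assumes "\<And>n. n \<ge> N \<Longrightarrow> v n \<ge> \<eta>" "0 < \<eta>"
  shows "u (N + k) \<le> max (((1 - \<alpha>U) * exp (-(c * \<eta>)) + \<alpha>U) ^ k * u N) (H1 R \<alpha>L)"
proof (rule iter_le)
  fix n assume "N \<le> n"
  then show "u (Suc n) \<le> max (((1 - \<alpha>U) * exp (-(c * \<eta>)) + \<alpha>U) * u n) (H1 R \<alpha>L)"
    using phi_dec[of \<alpha>L "al (Suc n)" \<alpha>U R "u n" "c * \<eta>" "c * v n" 0] st[of n] alr[of n] upos[of n] prm assms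
    unfolding H1_def by (auto intro: mult_left_mono)
next
  have "exp (-(c * \<eta>)) \<le> 1" using assms prm by simp
  then have "(1 - \<alpha>U) * exp (-(c * \<eta>)) \<le> (1 - \<alpha>U) * 1" using prm by (intro mult_left_mono) auto
  then show "(1 - \<alpha>U) * exp (-(c * \<eta>)) + \<alpha>U \<le> 1" by simp
  show "0 \<le> (1 - \<alpha>U) * exp (-(c * \<eta>)) + \<alpha>U" using prm alr[of 0] by simp
  show "0 \<le> H1 R \<alpha>L" unfolding H1_def using prm by simp
qed

lemma st_min:
  assumes "c * v n \<le> Wm" and hyp: "R - Wm \<le> u n \<Longrightarrow> Lo \<le> phi \<alpha>L R (u n) (c * v n)"
  shows "u (Suc n) \<ge> min (u n) Lo"
  using phi_min[of \<alpha>L "al (Suc n)" "u n" "c * v n" Wm R Lo] st[of n] alr[of n] upos[of n] prm assms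
  by auto

lemma st_phase4:
  assumes "\<And>n. n \<ge> N \<Longrightarrow> c * v n \<le> Wm"
    and hyp: "\<And>n. n \<ge> N \<Longrightarrow> R - Wm \<le> u n \<Longrightarrow> Lo \<le> phi \<alpha>L R (u n) (c * v n)"
    and "Lo \<le> R - Wm" "0 < h" "h \<le> Lo"
  shows "u (N + k) \<ge> min (((1 - \<alpha>U) * exp h + \<alpha>U) ^ k * u N) (Lo - h)"
proof (rule iter_ge)
  fix n assume "N \<le> n"
  then show "min (((1 - \<alpha>U) * exp h + \<alpha>U) * u n) (Lo - h) \<le> u (Suc n)"
    using phi_phase4[of \<alpha>L "al (Suc n)" \<alpha>U "u n" "c * v n" Wm R Lo h] st[of n] alr[of n] upos[of n] prm assms
    by auto
next
  have "exp h \<ge> 1" using assms by simp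
  then have "(1 - \<alpha>U) * 1 \<le> (1 - \<alpha>U) * exp h" using prm by (intro mult_left_mono) auto
  then show "1 \<le> (1 - \<alpha>U) * exp h + \<alpha>U" by simp
  show "0 \<le> Lo - h" using assms by simp
qed

lemma C1:
  assumes "0 \<le> \<delta>" "((1 - \<alpha>U) * exp (-\<delta>) + \<alpha>U) ^ N * u 0 < H1 R \<alpha>L + \<delta>" "n \<ge> N"
  shows "u n \<le> H1 R \<alpha>L + \<delta>"
proof -
  let ?q = "(1 - \<alpha>U) * exp (-\<delta>) + \<alpha>U"
  have "exp (-\<delta>) \<le> 1" using assms by simp
  then have "(1 - \<alpha>U) * exp (-\<delta>) \<le> (1 - \<alpha>U) * 1" using prm by (intro mult_left_mono) auto
  then have q1: "?q \<le> 1" by simp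
  have q0: "0 \<le> ?q" using prm alr[of 0] by simp
  have "?q ^ n \<le> ?q ^ N" using power_decreasing[OF assms(3) q0 q1] .
  then have "?q ^ n * u 0 \<le> ?q ^ N * u 0" using upos[of 0] by (simp add: mult_right_mono)
  then show ?thesis using st_phase1[OF assms(1), of n] assms by linarith
qed

lemma C2:
  assumes "\<And>n. n \<ge> N \<Longrightarrow> c * v n \<le> W" "W < R"
    "\<alpha>L * ((R - W) / 2) / (\<alpha>L ^ N * u 0) < ((1 - \<alpha>U) * exp ((R - W) / 2) + \<alpha>U) ^ M"
    "n \<ge> N + M"
  shows "u n \<ge> \<alpha>L * ((R - W) / 2)"
proof -
  let ?p = "(1 - \<alpha>U) * exp ((R - W) / 2) + \<alpha>U"
  define k where "k = n - N"
  have k: "n = N + k" "k \<ge> M" using assms(4) unfolding k_def by auto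
  have "exp ((R - W) / 2) \<ge> 1" using assms by simp
  then have "(1 - \<alpha>U) * 1 \<le> (1 - \<alpha>U) * exp ((R - W) / 2)" using prm by (intro mult_left_mono) auto
  then have p1: "1 \<le> ?p" by simp
  have pos: "0 < \<alpha>L ^ N * u 0" using prm upos[of 0] by simp
  have "\<alpha>L * ((R - W) / 2) < ?p ^ M * (\<alpha>L ^ N * u 0)" using assms(3) pos by (simp add: divide_less_eq)
  also have "\<dots> \<le> ?p ^ k * (\<alpha>L ^ N * u 0)" using power_increasing[OF k(2) p1] pos by (simp add: mult_right_mono)
  also have "\<dots> \<le> ?p ^ k * u N" using st_lower[of N] p1 by (intro mult_left_mono) auto
  finally have "\<alpha>L * ((R - W) / 2) \<le> ?p ^ k * u N" by simp
  then show ?thesis using st_phase2[where N=N and k=k, OF assms(1,2)] k by simp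
qed

lemma C3:
  assumes "\<And>n. n \<ge> N \<Longrightarrow> v n \<ge> \<eta>" "0 < \<eta>" "u N \<le> B" "0 < B"
    "((1 - \<alpha>U) * exp (-(c * \<eta>)) + \<alpha>U) ^ M < H1 R \<alpha>L / B"
    "n \<ge> N + M"
  shows "u n \<le> H1 R \<alpha>L"
proof -
  let ?q = "(1 - \<alpha>U) * exp (-(c * \<eta>)) + \<alpha>U"
  define k where "k = n - N"
  have k: "n = N + k" "k \<ge> M" using assms(6) unfolding k_def by auto
  have "exp (-(c * \<eta>)) \<le> 1" using assms prm by simp
  then have "(1 - \<alpha>U) * exp (-(c * \<eta>)) \<le> (1 - \<alpha>U) * 1" using prm by (intro mult_left_mono) auto
  then have q1: "?q \<le> 1" by simp
  have q0: "0 \<le> ?q" using prm alr[of 0] by simp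
  have "?q ^ k * u N \<le> ?q ^ M * B"
    using power_decreasing[OF k(2) q0 q1] assms upos[of N] q0 by (intro mult_mono) auto
  also have "\<dots> \<le> H1 R \<alpha>L" using assms(4,5) by (simp add: less_divide_eq)
  finally show ?thesis using st_phase3[where N=N and k=k, OF assms(1,2)] k by simp
qed

lemma C4:
  assumes "\<And>n. n \<ge> N \<Longrightarrow> c * v n \<le> Wm"
    and hyp: "\<And>n. n \<ge> N \<Longrightarrow> R - Wm \<le> u n \<Longrightarrow> Lo \<le> phi \<alpha>L R (u n) (c * v n)"
    and "Lo \<le> R - Wm" "0 < h" "h \<le> Lo"
    "(Lo - h) / (\<alpha>L ^ N * u 0) < ((1 - \<alpha>U) * exp h + \<alpha>U) ^ M"
    "n \<ge> N + M"
  shows "u n \<ge> Lo - h"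
proof -
  let ?p = "(1 - \<alpha>U) * exp h + \<alpha>U"
  define k where "k = n - N"
  have k: "n = N + k" "k \<ge> M" using assms(7) unfolding k_def by auto
  have "exp h \<ge> 1" using assms by simp
  then have "(1 - \<alpha>U) * 1 \<le> (1 - \<alpha>U) * exp h" using prm by (intro mult_left_mono) auto
  then have p1: "1 \<le> ?p" by simp
  have pos: "0 < \<alpha>L ^ N * u 0" using prm upos[of 0] by simp
  have "Lo - h < ?p ^ M * (\<alpha>L ^ N * u 0)" using assms(6) pos by (simp add: divide_less_eq)
  also have "\<dots> \<le> ?p ^ k * (\<alpha>L ^ N * u 0)" using power_increasing[OF k(2) p1] pos by (simp add: mult_right_mono)
  also have "\<dots> \<le> ?p ^ k * u N" using st_lower[of N] p1 by (intro mult_left_mono) auto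
  finally have "Lo - h \<le> ?p ^ k * u N" by simp
  then show ?thesis using st_phase4[where N=N and k=k, OF assms(1) hyp assms(3,4,5)] k by simp
qed

end



theorem mainTheorem4:
  fixes a b r s aL bL aU bU h :: real
  assumes "0 < a" "a < 1" "0 < b" "b < 1" "r > 2" "s > 2" "r > a * s" "s > b * r"
    and "alpha_tilde r s b < aL" "aL < 1" "beta_tilde r s a < bL" "bL < 1"
    and "aL < aU" "aU < 1" "bL < bU" "bU < 1"
    and "0 < h" "h < min (lc1 r s a aL bL) (lc2 r s b aL bL)"
  shows
    "(\<forall>al be x y.
        (\<forall>n. al (Suc n) \<in> {aL<..<aU} \<and> be (Suc n) \<in> {bL<..<bU}) \<longrightarrow>
        is_solution r s a b al be x y \<longrightarrow> x 0 > 0 \<longrightarrow> y 0 > 0 \<longrightarrow>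
        (x 0, y 0) \<in> D r s a b aL bL \<longrightarrow> (\<forall>n. (x n, y n) \<in> D r s a b aL bL))
   \<and> (\<forall>al be x y.
        (\<forall>n. al (Suc n) \<in> {aL<..<aU} \<and> be (Suc n) \<in> {bL<..<bU}) \<longrightarrow>
        is_solution r s a b al be x y \<longrightarrow> x 0 > 0 \<longrightarrow> y 0 > 0 \<longrightarrow>
        (x 0, y 0) \<in> Dh r s a b aL bL h \<longrightarrow> (\<forall>n. (x n, y n) \<in> Dh r s a b aL bL h))
   \<and> (\<forall>x0 y0. x0 > 0 \<longrightarrow> y0 > 0 \<longrightarrow> (x0, y0) \<notin> Dh r s a b aL bL h \<longrightarrow>
        (\<exists>S::nat. S \<ge> 1 \<and> (\<forall>al be x y.
           (\<forall>n. al (Suc n) \<in> {aL<..<aU} \<and> be (Suc n) \<in> {bL<..<bU}) \<longrightarrow>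
           is_solution r s a b al be x y \<longrightarrow> x 0 = x0 \<longrightarrow> y 0 = y0 \<longrightarrow>
           (\<forall>n\<ge>S. (x n, y n) \<in> Dh r s a b aL bL h))))"
proof -
  have aL0: "0 < aL" using assms(9) unfolding alpha_tilde_def by simp
  have bL0: "0 < bL" using assms(11) unfolding beta_tilde_def by simp
  define H where "H = H1 r aL"
  define K where "K = H2 s bL"
  define L1 where "L1 = lc1 r s a aL bL"
  define L2 where "L2 = lc2 r s b aL bL"
  have KH1: "K = H1 s bL" unfolding K_def by (rule H2_H1)
  have er: "exp (r - 1) > 2" using exp_ge_add_one_self[of "r - 1"] assms(5) by linarith
  have es: "exp (s - 1) > 2" using exp_ge_add_one_self[of "s - 1"] assms(6) by linarith
  have AH: "(1 - aL) * exp (r - 1) + 2 * aL < s / b"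
  proof -
    have "(exp (r - 1) - s / b) / (exp (r - 1) - 2) < aL" using assms(9) unfolding alpha_tilde_def by simp
    then have "exp (r - 1) - s / b < aL * (exp (r - 1) - 2)" using er by (simp add: divide_less_eq)
    then show ?thesis by (simp add: algebra_simps)
  qed
  have AK: "(1 - bL) * exp (s - 1) + 2 * bL < r / a"
  proof -
    have "(exp (s - 1) - r / a) / (exp (s - 1) - 2) < bL" using assms(11) unfolding beta_tilde_def by simp
    then have "exp (s - 1) - r / a < bL * (exp (s - 1) - 2)" using es by (simp add: divide_less_eq)
    then show ?thesis by (simp add: algebra_simps)
  qed
  have bH: "b * H < s"
  proof -
    have "b * ((1 - aL) * exp (r - 1) + 2 * aL) < s" using AH assms(3) by (simp add: less_divide_eq mult.commute)
    moreover have "b * r < s" using assms(8) .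
    ultimately show ?thesis unfolding H_def H1_def by (simp add: max_def)
  qed
  have aK: "a * K < r"
  proof -
    have "a * ((1 - bL) * exp (s - 1) + 2 * bL) < r" using AK assms(1) by (simp add: less_divide_eq mult.commute)
    moreover have "a * s < r" using assms(7) .
    ultimately show ?thesis unfolding K_def H2_def by (simp add: max_def)
  qed
  have Hr: "r \<le> H" unfolding H_def H1_def by simp
  have Ks: "s \<le> K" unfolding K_def H2_def by simp
  have fmap_phi: "\<And>\<alpha> x y. fmap r a \<alpha> x y = phi \<alpha> r x (a * y)" by (simp add: fmap_def phi_def)
  have gmap_phi: "\<And>\<beta> x y. gmap s b \<beta> x y = phi \<beta> s y (b * x)" by (simp add: gmap_def phi_def algebra_simps)
  have c1e: "c1 r s a bL = r - a * K" unfolding c1_def K_def ..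
  have c2e: "c2 r s b aL = s - b * H" unfolding c2_def H_def ..
  have bdd1: "bdd_below ((\<lambda>(x, y). fmap r a aL x y) ` ({c1 r s a bL .. H1 r aL} \<times> {0 .. H2 s bL}))"
  proof (rule bdd_belowI[where m=0])
    fix z assume "z \<in> (\<lambda>(x, y). fmap r a aL x y) ` ({c1 r s a bL .. H1 r aL} \<times> {0 .. H2 s bL})"
    then obtain x y where z: "z = fmap r a aL x y" "r - a * K \<le> x" using c1e by auto
    have "0 < x" using z aK by linarith
    then show "0 \<le> z" using phi_pos[of x aL r "a * y"] aL0 assms(10) z fmap_phi by auto
  qed
  have bdd2: "bdd_below ((\<lambda>(x, y). gmap s b bL x y) ` ({0 .. H1 r aL} \<times> {c2 r s b aL .. H2 s bL}))"
  proof (rule bdd_belowI[where m=0])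
    fix z assume "z \<in> (\<lambda>(x, y). gmap s b bL x y) ` ({0 .. H1 r aL} \<times> {c2 r s b aL .. H2 s bL})"
    then obtain x y where z: "z = gmap s b bL x y" "s - b * H \<le> y" using c2e by auto
    have "0 < y" using z bH by linarith
    then show "0 \<le> z" using phi_pos[of y bL s "b * x"] bL0 assms(12) z gmap_phi by auto
  qed
  have hypx: "\<And>x y. r - a * K \<le> x \<Longrightarrow> x \<le> H \<Longrightarrow> 0 \<le> y \<Longrightarrow> y \<le> K \<Longrightarrow> L1 \<le> phi aL r x (a * y)"
  proof -
    fix x y assume h: "r - a * K \<le> x" "x \<le> H" "0 \<le> y" "y \<le> K"
    have "fmap r a aL x y \<in> (\<lambda>(x, y). fmap r a aL x y) ` ({c1 r s a bL .. H1 r aL} \<times> {0 .. H2 s bL})"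
      by (rule image_eqI[where x="(x, y)"]) (use h c1e in \<open>auto simp: H_def K_def\<close>)
    then have "L1 \<le> fmap r a aL x y" unfolding L1_def lc1_def by (rule cInf_lower[OF _ bdd1])
    then show "L1 \<le> phi aL r x (a * y)" using fmap_phi by simp
  qed
  have hypy: "\<And>x y. s - b * H \<le> y \<Longrightarrow> y \<le> K \<Longrightarrow> 0 \<le> x \<Longrightarrow> x \<le> H \<Longrightarrow> L2 \<le> phi bL s y (b * x)"
  proof -
    fix x y assume h: "s - b * H \<le> y" "y \<le> K" "0 \<le> x" "x \<le> H"
    have "gmap s b bL x y \<in> (\<lambda>(x, y). gmap s b bL x y) ` ({0 .. H1 r aL} \<times> {c2 r s b aL .. H2 s bL})"
      by (rule image_eqI[where x="(x, y)"]) (use h c2e in \<open>auto simp: H_def K_def\<close>)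
    then have "L2 \<le> gmap s b bL x y" unfolding L2_def lc2_def by (rule cInf_lower[OF _ bdd2])
    then show "L2 \<le> phi bL s y (b * x)" using gmap_phi by simp
  qed
  have L1c: "L1 \<le> r - a * K"
  proof -
    have "0 \<le> a * K" using assms(1) Ks assms(6) by simp
    then have "L1 \<le> phi aL r (r - a * K) (a * K)" by (intro hypx) (use Hr Ks assms(6) in auto)
    also have "\<dots> = r - a * K" by (simp add: phi_def)
    finally show ?thesis .
  qed
  have L2c: "L2 \<le> s - b * H"
  proof -
    have "0 \<le> b * H" using assms(3) Hr assms(5) by simp
    then have "L2 \<le> phi bL s (s - b * H) (b * H)" by (intro hypy) (use Hr Ks assms(5) in auto)
    also have "\<dots> = s - b * H" by (simp add: phi_def)
    finally show ?thesis .
  qed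
  have hL1: "h < L1" and hL2: "h < L2" using assms(18) unfolding L1_def L2_def by auto
  have unpack: "\<And>al be x y. (\<forall>n. al (Suc n) \<in> {aL<..<aU} \<and> be (Suc n) \<in> {bL<..<bU}) \<Longrightarrow>
      is_solution r s a b al be x y \<Longrightarrow>
      (\<forall>n. x (Suc n) = phi (al (Suc n)) r (x n) (a * y n)) \<and> (\<forall>n. y (Suc n) = phi (be (Suc n)) s (y n) (b * x n))
      \<and> (\<forall>n. aL < al (Suc n) \<and> al (Suc n) < aU) \<and> (\<forall>n. bL < be (Suc n) \<and> be (Suc n) < bU)"
    by (auto simp: is_solution_def phi_def algebra_simps)
  have inv: "\<And>al be x y. (\<forall>n. al (Suc n) \<in> {aL<..<aU} \<and> be (Suc n) \<in> {bL<..<bU}) \<Longrightarrow>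
      is_solution r s a b al be x y \<Longrightarrow> 0 < x 0 \<Longrightarrow> 0 < y 0 \<Longrightarrow> x 0 \<le> H \<Longrightarrow> y 0 \<le> K \<Longrightarrow>
      \<forall>n. x n \<le> H \<and> y n \<le> K \<and> min (x 0) L1 \<le> x n \<and> min (y 0) L2 \<le> y n"
  proof -
    fix al be x y
    assume rg: "\<forall>n. al (Suc n) \<in> {aL<..<aU} \<and> be (Suc n) \<in> {bL<..<bU}"
      and sol: "is_solution r s a b al be x y" and x0: "0 < x 0" and y0: "0 < y 0"
      and xH: "x 0 \<le> H" and yK: "y 0 \<le> K"
    from unpack[OF rg sol] have X: "\<And>n. x (Suc n) = phi (al (Suc n)) r (x n) (a * y n)"
      and Y: "\<And>n. y (Suc n) = phi (be (Suc n)) s (y n) (b * x n)"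
      and ra: "\<And>n. aL < al (Suc n) \<and> al (Suc n) < aU" and rb: "\<And>n. bL < be (Suc n) \<and> be (Suc n) < bU"
      by auto
    have ra': "\<And>n. 0 < al (Suc n) \<and> al (Suc n) < 1" using ra aL0 assms(14) by (meson less_trans)
    have rb': "\<And>n. 0 < be (Suc n) \<and> be (Suc n) < 1" using rb bL0 assms(16) by (meson less_trans)
    have xp: "\<And>n. 0 < x n" and yp: "\<And>n. 0 < y n" using pos_seq[OF X Y ra' rb' x0 y0] by auto
    note cx = X ra aL0 assms(14) assms(5) assms(1) xp yp
    note cy = Y rb bL0 assms(16) assms(6) assms(3) yp xp
    show "\<forall>n. x n \<le> H \<and> y n \<le> K \<and> min (x 0) L1 \<le> x n \<and> min (y 0) L2 \<le> y n"
    proof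
      fix n show "x n \<le> H \<and> y n \<le> K \<and> min (x 0) L1 \<le> x n \<and> min (y 0) L2 \<le> y n"
      proof (induction n)
        case 0 then show ?case using xH yK by simp
      next
        case (Suc n)
        then have IH: "x n \<le> H" "y n \<le> K" "min (x 0) L1 \<le> x n" "min (y 0) L2 \<le> y n" by auto
        have 1: "x (Suc n) \<le> H" using st_upper_inv[where u=x and v=y and al=al and \<alpha>L=aL and \<alpha>U=aU and R=r and c=a, OF cx] IH unfolding H_def by blast
        have 2: "y (Suc n) \<le> K" using st_upper_inv[where u=y and v=x and al=be and \<alpha>L=bL and \<alpha>U=bU and R=s and c=b, OF cy] IH unfolding KH1 by blast
        have "min (x n) L1 \<le> x (Suc n)"
        proof (rule st_min[where u=x and v=y and al=al and \<alpha>L=aL and \<alpha>U=aU and R=r and c=a, OF cx, where Wm="a * K"])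
          show "a * y n \<le> a * K" using IH assms(1) by simp
          show "r - a * K \<le> x n \<Longrightarrow> L1 \<le> phi aL r (x n) (a * y n)"
            using hypx[of "x n" "y n"] IH yp[of n] by simp
        qed
        then have 3: "min (x 0) L1 \<le> x (Suc n)" using IH by linarith
        have "min (y n) L2 \<le> y (Suc n)"
        proof (rule st_min[where u=y and v=x and al=be and \<alpha>L=bL and \<alpha>U=bU and R=s and c=b, OF cy, where Wm="b * H"])
          show "b * x n \<le> b * H" using IH assms(3) by simp
          show "s - b * H \<le> y n \<Longrightarrow> L2 \<le> phi bL s (y n) (b * x n)"
            using hypy[of "y n" "x n"] IH xp[of n] by simp
        qed
        then have 4: "min (y 0) L2 \<le> y (Suc n)" using IH by linarith
        show ?case using 1 2 3 4 by simp
      qed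
    qed
  qed
  have partA: "\<forall>al be x y.
        (\<forall>n. al (Suc n) \<in> {aL<..<aU} \<and> be (Suc n) \<in> {bL<..<bU}) \<longrightarrow>
        is_solution r s a b al be x y \<longrightarrow> x 0 > 0 \<longrightarrow> y 0 > 0 \<longrightarrow>
        (x 0, y 0) \<in> D r s a b aL bL \<longrightarrow> (\<forall>n. (x n, y n) \<in> D r s a b aL bL)"
  proof (intro allI impI)
    fix al be x y n
    assume rg: "\<forall>n. al (Suc n) \<in> {aL<..<aU} \<and> be (Suc n) \<in> {bL<..<bU}"
      and sol: "is_solution r s a b al be x y" and x0: "0 < x 0" and y0: "0 < y 0"
      and D0: "(x 0, y 0) \<in> D r s a b aL bL"
    have d: "L1 \<le> x 0" "x 0 \<le> H" "L2 \<le> y 0" "y 0 \<le> K"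
      using D0 unfolding D_def H_def K_def L1_def L2_def by auto
    have "x n \<le> H \<and> y n \<le> K \<and> min (x 0) L1 \<le> x n \<and> min (y 0) L2 \<le> y n"
      using inv[OF rg sol x0 y0 d(2) d(4)] by blast
    then show "(x n, y n) \<in> D r s a b aL bL"
      using d unfolding D_def H_def[symmetric] K_def[symmetric] L1_def[symmetric] L2_def[symmetric] by auto
  qed
  have partB: "\<forall>al be x y.
        (\<forall>n. al (Suc n) \<in> {aL<..<aU} \<and> be (Suc n) \<in> {bL<..<bU}) \<longrightarrow>
        is_solution r s a b al be x y \<longrightarrow> x 0 > 0 \<longrightarrow> y 0 > 0 \<longrightarrow>
        (x 0, y 0) \<in> Dh r s a b aL bL h \<longrightarrow> (\<forall>n. (x n, y n) \<in> Dh r s a b aL bL h)"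
  proof (intro allI impI)
    fix al be x y n
    assume rg: "\<forall>n. al (Suc n) \<in> {aL<..<aU} \<and> be (Suc n) \<in> {bL<..<bU}"
      and sol: "is_solution r s a b al be x y" and x0: "0 < x 0" and y0: "0 < y 0"
      and D0: "(x 0, y 0) \<in> Dh r s a b aL bL h"
    have d: "L1 - h \<le> x 0" "x 0 \<le> H" "L2 - h \<le> y 0" "y 0 \<le> K"
      using D0 unfolding Dh_def H_def K_def L1_def L2_def by auto
    have "x n \<le> H \<and> y n \<le> K \<and> min (x 0) L1 \<le> x n \<and> min (y 0) L2 \<le> y n"
      using inv[OF rg sol x0 y0 d(2) d(4)] by blast
    then show "(x n, y n) \<in> Dh r s a b aL bL h"
      using d assms(17) unfolding Dh_def H_def[symmetric] K_def[symmetric] L1_def[symmetric] L2_def[symmetric] by auto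
  qed
  have partC: "\<forall>x0 y0. x0 > 0 \<longrightarrow> y0 > 0 \<longrightarrow> (x0, y0) \<notin> Dh r s a b aL bL h \<longrightarrow>
        (\<exists>S::nat. S \<ge> 1 \<and> (\<forall>al be x y.
           (\<forall>n. al (Suc n) \<in> {aL<..<aU} \<and> be (Suc n) \<in> {bL<..<bU}) \<longrightarrow>
           is_solution r s a b al be x y \<longrightarrow> x 0 = x0 \<longrightarrow> y 0 = y0 \<longrightarrow>
           (\<forall>n\<ge>S. (x n, y n) \<in> Dh r s a b aL bL h)))"
  proof (intro allI impI)
    fix x0 y0 :: real assume x0: "0 < x0" and y0: "0 < y0"
    have H0: "0 < H" using Hr assms(5) by simp
    have K0: "0 < K" using Ks assms(6) by simp
    define \<delta> where "\<delta> = min (s - b * H) (r - a * K) / 2"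
    have \<delta>0: "0 < \<delta>" using bH aK by (simp add: \<delta>_def)
    define Wx where "Wx = a * (K + \<delta>)"
    define Wy where "Wy = b * (H + \<delta>)"
    have Wx: "Wx < r"
    proof -
      have "a * \<delta> < \<delta>" using assms(2) \<delta>0 by simp
      moreover have "\<delta> \<le> (r - a * K) / 2" unfolding \<delta>_def by simp
      ultimately show ?thesis unfolding Wx_def using aK by (simp add: algebra_simps)
    qed
    have Wy: "Wy < s"
    proof -
      have "b * \<delta> < \<delta>" using assms(4) \<delta>0 by simp
      moreover have "\<delta> \<le> (s - b * H) / 2" unfolding \<delta>_def by simp
      ultimately show ?thesis unfolding Wy_def using bH by (simp add: algebra_simps)
    qed
    have qlt: "\<And>u d :: real. 0 < d \<Longrightarrow> u < 1 \<Longrightarrow> (1 - u) * exp (- d) + u < 1"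
    proof -
      fix u d :: real assume "0 < d" "u < 1"
      then have "(1 - u) * exp (- d) < (1 - u) * 1" by (intro mult_strict_left_mono) auto
      then show "(1 - u) * exp (- d) + u < 1" by simp
    qed
    have pgt: "\<And>u d :: real. 0 < d \<Longrightarrow> u < 1 \<Longrightarrow> 1 < (1 - u) * exp d + u"
    proof -
      fix u d :: real assume "0 < d" "u < 1"
      then have "(1 - u) * 1 < (1 - u) * exp d" by (intro mult_strict_left_mono) auto
      then show "1 < (1 - u) * exp d + u" by simp
    qed
    obtain N1x where N1x: "((1 - aU) * exp (- \<delta>) + aU) ^ N1x < (H + \<delta>) / x0"
      using real_arch_pow_inv[OF _ qlt[OF \<delta>0 assms(14)], of "(H + \<delta>) / x0"] H0 \<delta>0 x0 by auto
    obtain N1y where N1y: "((1 - bU) * exp (- \<delta>) + bU) ^ N1y < (K + \<delta>) / y0"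
      using real_arch_pow_inv[OF _ qlt[OF \<delta>0 assms(16)], of "(K + \<delta>) / y0"] K0 \<delta>0 y0 by auto
    define N1 where "N1 = N1x + N1y"
    define \<eta>x where "\<eta>x = aL * ((r - Wx) / 2)"
    define \<eta>y where "\<eta>y = bL * ((s - Wy) / 2)"
    have \<eta>x0: "0 < \<eta>x" unfolding \<eta>x_def using aL0 Wx by simp
    have \<eta>y0: "0 < \<eta>y" unfolding \<eta>y_def using bL0 Wy by simp
    obtain N2x where N2x: "\<eta>x / (aL ^ N1 * x0) < ((1 - aU) * exp ((r - Wx) / 2) + aU) ^ N2x"
      using real_arch_pow[OF pgt[of "(r - Wx) / 2" aU]] Wx assms(14) by auto
    obtain N2y where N2y: "\<eta>y / (bL ^ N1 * y0) < ((1 - bU) * exp ((s - Wy) / 2) + bU) ^ N2y"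
      using real_arch_pow[OF pgt[of "(s - Wy) / 2" bU]] Wy assms(16) by auto
    define N2 where "N2 = N2x + N2y"
    obtain N3x where N3x: "((1 - aU) * exp (-(a * \<eta>y)) + aU) ^ N3x < H1 r aL / (H + \<delta>)"
      using real_arch_pow_inv[OF _ qlt[of "a * \<eta>y" aU], of "H1 r aL / (H + \<delta>)"] H0 \<delta>0 \<eta>y0 assms(1,14)
      unfolding H_def by auto
    obtain N3y where N3y: "((1 - bU) * exp (-(b * \<eta>x)) + bU) ^ N3y < H1 s bL / (K + \<delta>)"
      using real_arch_pow_inv[OF _ qlt[of "b * \<eta>x" bU], of "H1 s bL / (K + \<delta>)"] K0 \<delta>0 \<eta>x0 assms(3,16)
      unfolding KH1 by auto
    define T where "T = N1 + N2 + N3x + N3y"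
    obtain N4x where N4x: "(L1 - h) / (aL ^ T * x0) < ((1 - aU) * exp h + aU) ^ N4x"
      using real_arch_pow[OF pgt[OF assms(17) assms(14)]] by auto
    obtain N4y where N4y: "(L2 - h) / (bL ^ T * y0) < ((1 - bU) * exp h + bU) ^ N4y"
      using real_arch_pow[OF pgt[OF assms(17) assms(16)]] by auto
    define S where "S = T + N4x + N4y + 1"
    show "\<exists>S::nat. S \<ge> 1 \<and> (\<forall>al be x y.
           (\<forall>n. al (Suc n) \<in> {aL<..<aU} \<and> be (Suc n) \<in> {bL<..<bU}) \<longrightarrow>
           is_solution r s a b al be x y \<longrightarrow> x 0 = x0 \<longrightarrow> y 0 = y0 \<longrightarrow>
           (\<forall>n\<ge>S. (x n, y n) \<in> Dh r s a b aL bL h))"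
    proof (intro exI[of _ S] conjI allI impI)
      show "1 \<le> S" unfolding S_def by simp
      fix al be x y n
      assume rg: "\<forall>n. al (Suc n) \<in> {aL<..<aU} \<and> be (Suc n) \<in> {bL<..<bU}"
        and sol: "is_solution r s a b al be x y" and x0e: "x 0 = x0" and y0e: "y 0 = y0"
        and nS: "S \<le> n"
      from unpack[OF rg sol] have X: "\<And>n. x (Suc n) = phi (al (Suc n)) r (x n) (a * y n)"
        and Y: "\<And>n. y (Suc n) = phi (be (Suc n)) s (y n) (b * x n)"
        and ra: "\<And>n. aL < al (Suc n) \<and> al (Suc n) < aU" and rb: "\<And>n. bL < be (Suc n) \<and> be (Suc n) < bU"
        by auto
      have ra': "\<And>n. 0 < al (Suc n) \<and> al (Suc n) < 1" using ra aL0 assms(14) by (meson less_trans)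
      have rb': "\<And>n. 0 < be (Suc n) \<and> be (Suc n) < 1" using rb bL0 assms(16) by (meson less_trans)
      have xp: "\<And>n. 0 < x n" and yp: "\<And>n. 0 < y n" using pos_seq[where x=x and y=y and al=al and be=be, OF X Y ra' rb'] x0 y0 x0e y0e by auto
      note cx = X ra aL0 assms(14) assms(5) assms(1) xp yp
      note cy = Y rb bL0 assms(16) assms(6) assms(3) yp xp
      have ph1x: "\<And>n. n \<ge> N1 \<Longrightarrow> x n \<le> H + \<delta>"
        using C1[where u=x and v=y and al=al and \<alpha>L=aL and \<alpha>U=aU and R=r and c=a, OF cx, where \<delta>=\<delta> and N=N1x] \<delta>0 N1x x0 x0e unfolding N1_def H_def
        by (simp add: less_divide_eq)
      have ph1y: "\<And>n. n \<ge> N1 \<Longrightarrow> y n \<le> K + \<delta>"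
        using C1[where u=y and v=x and al=be and \<alpha>L=bL and \<alpha>U=bU and R=s and c=b, OF cy, where \<delta>=\<delta> and N=N1y] \<delta>0 N1y y0 y0e unfolding N1_def KH1
        by (simp add: less_divide_eq)
      have ph2x: "\<And>n. n \<ge> N1 + N2 \<Longrightarrow> x n \<ge> \<eta>x"
      proof -
        fix n assume "n \<ge> N1 + N2"
        then have n: "n \<ge> N1 + N2x" unfolding N2_def by simp
        show "x n \<ge> \<eta>x" unfolding \<eta>x_def
        proof (rule C2[where u=x and v=y and al=al and \<alpha>L=aL and \<alpha>U=aU and R=r and c=a, OF cx, where N=N1 and W=Wx and M=N2x])
          show "a * y m \<le> Wx" if "m \<ge> N1" for m
            using ph1y[OF that] assms(1) unfolding Wx_def by simp
        qed (use Wx N2x x0e n in \<open>auto simp: \<eta>x_def\<close>)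
      qed
      have ph2y: "\<And>n. n \<ge> N1 + N2 \<Longrightarrow> y n \<ge> \<eta>y"
      proof -
        fix n assume "n \<ge> N1 + N2"
        then have n: "n \<ge> N1 + N2y" unfolding N2_def by simp
        show "y n \<ge> \<eta>y" unfolding \<eta>y_def
        proof (rule C2[where u=y and v=x and al=be and \<alpha>L=bL and \<alpha>U=bU and R=s and c=b, OF cy, where N=N1 and W=Wy and M=N2y])
          show "b * x m \<le> Wy" if "m \<ge> N1" for m
            using ph1x[OF that] assms(3) unfolding Wy_def by simp
        qed (use Wy N2y y0e n in \<open>auto simp: \<eta>y_def\<close>)
      qed
      have ph3x: "\<And>n. n \<ge> T \<Longrightarrow> x n \<le> H"
      proof -
        fix n assume "n \<ge> T"
        then have n: "n \<ge> N1 + N2 + N3x" unfolding T_def by simp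
        show "x n \<le> H" unfolding H_def
          by (rule C3[where u=x and v=y and al=al and \<alpha>L=aL and \<alpha>U=aU and R=r and c=a, OF cx, where N="N1 + N2" and \<eta>=\<eta>y and B="H + \<delta>" and M=N3x])
             (use ph2y \<eta>y0 ph1x H0 \<delta>0 N3x n in auto)
      qed
      have ph3y: "\<And>n. n \<ge> T \<Longrightarrow> y n \<le> K"
      proof -
        fix n assume "n \<ge> T"
        then have n: "n \<ge> N1 + N2 + N3y" unfolding T_def by simp
        show "y n \<le> K" unfolding KH1
          by (rule C3[where u=y and v=x and al=be and \<alpha>L=bL and \<alpha>U=bU and R=s and c=b, OF cy, where N="N1 + N2" and \<eta>=\<eta>x and B="K + \<delta>" and M=N3y])
             (use ph2x \<eta>x0 ph1y K0 \<delta>0 N3y n in auto)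
      qed
      have ph4x: "x n \<ge> L1 - h"
      proof (rule C4[where u=x and v=y and al=al and \<alpha>L=aL and \<alpha>U=aU and R=r and c=a, OF cx, where N=T and Wm="a * K" and Lo=L1 and M=N4x])
        show "a * y m \<le> a * K" if "m \<ge> T" for m using ph3y[OF that] assms(1) by simp
        show "L1 \<le> phi aL r (x m) (a * y m)" if "m \<ge> T" "r - a * K \<le> x m" for m
          using hypx[of "x m" "y m"] ph3x[OF that(1)] ph3y[OF that(1)] yp[of m] that(2) by simp
      qed (use L1c assms(17) hL1 N4x x0e nS in \<open>auto simp: S_def\<close>)
      have ph4y: "y n \<ge> L2 - h"
      proof (rule C4[where u=y and v=x and al=be and \<alpha>L=bL and \<alpha>U=bU and R=s and c=b, OF cy, where N=T and Wm="b * H" and Lo=L2 and M=N4y])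
        show "b * x m \<le> b * H" if "m \<ge> T" for m using ph3x[OF that] assms(3) by simp
        show "L2 \<le> phi bL s (y m) (b * x m)" if "m \<ge> T" "s - b * H \<le> y m" for m
          using hypy[of "y m" "x m"] ph3x[OF that(1)] ph3y[OF that(1)] xp[of m] that(2) by simp
      qed (use L2c assms(17) hL2 N4y y0e nS in \<open>auto simp: S_def\<close>)
      have "n \<ge> T" using nS unfolding S_def by simp
      then show "(x n, y n) \<in> Dh r s a b aL bL h"
        using ph3x ph3y ph4x ph4y
        unfolding Dh_def H_def[symmetric] K_def[symmetric] L1_def[symmetric] L2_def[symmetric] by auto
    qed
  qed
  show ?thesis using partA partB partC by blast
qed

end
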